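(* Let $E$ be a finite set. The U-matroid rank functions on $E$ are precisely the restrictions $\rho|_\mathcal{D}$ of matroid rank functions $\rho:2^E\to\mathbb{N}$ to accessible distributive sublattices $\mathcal{D}\subseteq 2^E$.
   Context: An accessible distributive lattice on a finite set $E$ is a family $\mathcal{D}\subseteq 2^E$ containing $\emptyset$ and $E$, closed under union and intersection, such that every nonempty $A\in\mathcal{D}$ contains some $x$ with $A\setminus\{x\}\in\mathcal{D}$. A U-matroid rank function on $E$ is a function $\rho:\mathcal{D}\to\mathbb{N}$ on an accessible distributive lattice $\mathcal{D}\subseteq2^E$ satisfying $\rho(\emptyset)=0$; $\rho(A)\le\rho(B)$ whenever $A\subseteq B$; $\rho(A)+\rho(B)\ge\rho(A\cup B)+\rho(A\cap B)$; and $\rho(A\cup\{e\})-\rho(A)\le1$ whenever $A,A\cup\{e\}\in\mathcal{D}$. A matroid rank function is such a function with $\mathcal{D}=2^E$. *)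

theory Defs
  imports Main
begin

definition accessible_distributive_lattice :: "'a set \<Rightarrow> 'a set set \<Rightarrow> bool" where
  "accessible_distributive_lattice E D \<longleftrightarrow>
     D \<subseteq> Pow E \<and> {} \<in> D \<and> E \<in> D \<and>
     (\<forall>A\<in>D. \<forall>B\<in>D. A \<union> B \<in> D \<and> A \<inter> B \<in> D) \<and>
     (\<forall>A\<in>D. A \<noteq> {} \<longrightarrow> (\<exists>x\<in>A. A - {x} \<in> D))"

definition umatroid_rank :: "'a set \<Rightarrow> 'a set set \<Rightarrow> ('a set \<Rightarrow> nat) \<Rightarrow> bool" where
  "umatroid_rank E D rho \<longleftrightarrow>
     accessible_distributive_lattice E D \<and>
     rho {} = 0 \<and>
     (\<forall>A\<in>D. \<forall>B\<in>D. A \<subseteq> B \<longrightarrow> rho A \<le> rho B) \<and>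
     (\<forall>A\<in>D. \<forall>B\<in>D. rho A + rho B \<ge> rho (A \<union> B) + rho (A \<inter> B)) \<and>
     (\<forall>A e. A \<in> D \<longrightarrow> A \<union> {e} \<in> D \<longrightarrow> rho (A \<union> {e}) \<le> rho A + 1)"

definition matroid_rank :: "'a set \<Rightarrow> ('a set \<Rightarrow> nat) \<Rightarrow> bool" where
  "matroid_rank E rho \<longleftrightarrow> umatroid_rank E (Pow E) rho"

end

theory Submission
  imports Defs
begin

lemma chain_bound:
  assumes adl: "accessible_distributive_lattice E D" and fin: "finite E"
    and sub: "\<forall>A\<in>D. \<forall>B\<in>D. rho A + rho B \<ge> rho (A \<union> B) + rho (A \<inter> B)"
    and unit: "\<forall>A e. A \<in> D \<longrightarrow> A \<union> {e} \<in> D \<longrightarrow> rho (A \<union> {e}) \<le> rho A + 1"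
  shows "C' \<in> D \<Longrightarrow> C \<in> D \<Longrightarrow> C \<subseteq> C' \<Longrightarrow> rho C' \<le> rho C + card (C' - C)"
proof (induction "card C'" arbitrary: C' C rule: less_induct)
  case less
  have DE: "D \<subseteq> Pow E" and cl: "\<forall>A\<in>D. \<forall>B\<in>D. A \<union> B \<in> D \<and> A \<inter> B \<in> D"
    and acc: "\<forall>A\<in>D. A \<noteq> {} \<longrightarrow> (\<exists>x\<in>A. A - {x} \<in> D)"
    using adl unfolding accessible_distributive_lattice_def by auto
  show ?case
  proof (cases "C' = C")
    case True then show ?thesis by simp
  next
    case False
    then have "C' \<noteq> {}" using less.prems by auto
    then obtain x where x: "x \<in> C'" "C' - {x} \<in> D" using acc less.prems by blast
    have finC': "finite C'" using less.prems DE fin by (meson PowD finite_subset subsetD)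
    have lt: "card (C' - {x}) < card C'" using x finC' by (meson card_Diff1_less)
    show ?thesis
    proof (cases "x \<in> C")
      case False
      have "C \<subseteq> C' - {x}" using less.prems False by auto
      then have ih: "rho (C' - {x}) \<le> rho C + card (C' - {x} - C)"
        using less.hyps[OF lt x(2) less.prems(2)] by blast
      have eq: "C' = (C' - {x}) \<union> {x}" using x by auto
      have "rho C' \<le> rho (C' - {x}) + 1" using unit x less.prems(1) eq by metis
      moreover have "card (C' - C) = card (C' - {x} - C) + 1"
      proof -
        have "C' - C = insert x (C' - {x} - C)" using x False by auto
        then show ?thesis using finC' by simp
      qed
      ultimately show ?thesis using ih by linarith
    next
      case True
      have CxD: "C - {x} \<in> D"
      proof -
        have "C - {x} = C \<inter> (C' - {x})" using less.prems by auto
        then show ?thesis using cl x less.prems by metis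
      qed
      have ih: "rho (C' - {x}) \<le> rho (C - {x}) + card (C' - {x} - (C - {x}))"
        using less.hyps[OF lt x(2) CxD] less.prems by blast
      have e1: "C' - {x} - (C - {x}) = C' - C" using True by auto
      have u: "(C' - {x}) \<union> C = C'" using True less.prems x by auto
      have i: "(C' - {x}) \<inter> C = C - {x}" using less.prems by auto
      have "rho (C' - {x}) + rho C \<ge> rho C' + rho (C - {x})"
        using sub x(2) less.prems(2) u i by metis
      then show ?thesis using ih unfolding e1 by linarith
    qed
  qed
qed

lemma card_ineq:
  assumes "finite (X \<union> Y)"
  shows "card (X \<union> Y - (A \<union> B)) + card (X \<inter> Y - (A \<inter> B)) \<le> card (X - A) + card (Y - B)"
proof -
  let ?U = "X \<union> Y - (A \<union> B)" and ?V = "X \<inter> Y - (A \<inter> B)" and ?P = "X - A" and ?Q = "Y - B"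
  have f: "finite ?U" "finite ?V" "finite ?P" "finite ?Q" using assms by auto
  have "card ?U + card ?V = card (?U \<union> ?V) + card (?U \<inter> ?V)"
    using card_Un_Int f by blast
  also have "\<dots> \<le> card (?P \<union> ?Q) + card (?P \<inter> ?Q)"
  proof (rule add_mono)
    show "card (?U \<union> ?V) \<le> card (?P \<union> ?Q)" by (rule card_mono) (use f in auto)
    show "card (?U \<inter> ?V) \<le> card (?P \<inter> ?Q)" by (rule card_mono) (use f in auto)
  qed
  also have "\<dots> = card ?P + card ?Q" using card_Un_Int f by metis
  finally show ?thesis .
qed

theorem corollary4p13:
  fixes E :: "'a set" and D :: "'a set set" and rho :: "'a set \<Rightarrow> nat"
  assumes "finite E"
  shows "umatroid_rank E D rho \<longleftrightarrow>
           (accessible_distributive_lattice E D \<and>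
            (\<exists>r. matroid_rank E r \<and> (\<forall>A\<in>D. rho A = r A)))"
proof
  assume R: "accessible_distributive_lattice E D \<and> (\<exists>r. matroid_rank E r \<and> (\<forall>A\<in>D. rho A = r A))"
  then obtain r where adl: "accessible_distributive_lattice E D" and mr: "matroid_rank E r"
    and eq: "\<forall>A\<in>D. rho A = r A" by blast
  have DE: "D \<subseteq> Pow E" and cl: "\<forall>A\<in>D. \<forall>B\<in>D. A \<union> B \<in> D \<and> A \<inter> B \<in> D" and e: "{} \<in> D"
    using adl unfolding accessible_distributive_lattice_def by auto
  have r0: "r {} = 0"
    and rm: "\<forall>A\<in>Pow E. \<forall>B\<in>Pow E. A \<subseteq> B \<longrightarrow> r A \<le> r B"
    and rs: "\<forall>A\<in>Pow E. \<forall>B\<in>Pow E. r A + r B \<ge> r (A \<union> B) + r (A \<inter> B)"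
    and ru: "\<forall>A e. A \<in> Pow E \<longrightarrow> A \<union> {e} \<in> Pow E \<longrightarrow> r (A \<union> {e}) \<le> r A + 1"
    using mr unfolding matroid_rank_def umatroid_rank_def by auto
  show "umatroid_rank E D rho"
    unfolding umatroid_rank_def
  proof (intro conjI allI impI ballI)
    show "accessible_distributive_lattice E D" by (rule adl)
    show "rho {} = 0" using eq e r0 by simp
  next
    fix A B assume "A \<in> D" "B \<in> D" "A \<subseteq> B"
    then show "rho A \<le> rho B" using eq rm DE by auto
  next
    fix A B assume ab: "A \<in> D" "B \<in> D"
    then have "A \<union> B \<in> D" "A \<inter> B \<in> D" using cl by auto
    then show "rho A + rho B \<ge> rho (A \<union> B) + rho (A \<inter> B)" using ab eq rs DE by auto
  next
    fix A e assume "A \<in> D" "A \<union> {e} \<in> D"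
    then show "rho (A \<union> {e}) \<le> rho A + 1" using eq ru DE by (metis subsetD)
  qed
next
  assume U: "umatroid_rank E D rho"
  have adl: "accessible_distributive_lattice E D" and r0: "rho {} = 0"
    and mono: "\<forall>A\<in>D. \<forall>B\<in>D. A \<subseteq> B \<longrightarrow> rho A \<le> rho B"
    and sub: "\<forall>A\<in>D. \<forall>B\<in>D. rho A + rho B \<ge> rho (A \<union> B) + rho (A \<inter> B)"
    and unit: "\<forall>A e. A \<in> D \<longrightarrow> A \<union> {e} \<in> D \<longrightarrow> rho (A \<union> {e}) \<le> rho A + 1"
    using U unfolding umatroid_rank_def by auto
  have DE: "D \<subseteq> Pow E" and cl: "\<forall>A\<in>D. \<forall>B\<in>D. A \<union> B \<in> D \<and> A \<inter> B \<in> D" and e: "{} \<in> D"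
    using adl unfolding accessible_distributive_lattice_def by auto
  have finD: "finite D" using DE assms by (meson finite_Pow_iff finite_subset)
  define r where "r X = Min ((\<lambda>A. rho A + card (X - A)) ` D)" for X
  have rle: "r X \<le> rho A + card (X - A)" if "A \<in> D" for X A
    unfolding r_def using finD that by simp
  have rex: "\<exists>A\<in>D. r X = rho A + card (X - A)" for X
  proof -
    have "r X \<in> (\<lambda>A. rho A + card (X - A)) ` D"
      unfolding r_def using finD e by (intro Min_in) auto
    then show ?thesis by auto
  qed
  have key: "rho A \<le> rho B + card (A - B)" if "A \<in> D" "B \<in> D" for A B
  proof -
    have "A \<union> B \<in> D" using cl that by auto
    then have "rho A \<le> rho (A \<union> B)" using mono that by auto
    also have "\<dots> \<le> rho B + card (A \<union> B - B)"
      using chain_bound[OF adl assms sub unit] \<open>A \<union> B \<in> D\<close> that by blast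
    also have "A \<union> B - B = A - B" by auto
    finally show ?thesis .
  qed
  have agree: "\<forall>A\<in>D. rho A = r A"
  proof
    fix A assume A: "A \<in> D"
    have "r A \<le> rho A" using rle[OF A, of A] by simp
    moreover obtain B where "B \<in> D" "r A = rho B + card (A - B)" using rex by blast
    ultimately show "rho A = r A" using key[OF A] by fastforce
  qed
  have "matroid_rank E r"
    unfolding matroid_rank_def umatroid_rank_def
  proof (intro conjI allI impI ballI)
    show "accessible_distributive_lattice E (Pow E)"
      unfolding accessible_distributive_lattice_def
    proof (intro conjI ballI impI)
      fix A assume "A \<in> Pow E" "A \<noteq> {}"
      then obtain x where "x \<in> A" by blast
      then show "\<exists>x\<in>A. A - {x} \<in> Pow E" using \<open>A \<in> Pow E\<close> by auto
    qed auto
    show "r {} = 0" using rle[OF e, of "{}"] r0 by simp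
  next
    fix A B assume A: "A \<in> Pow E" and B: "B \<in> Pow E" and AB: "A \<subseteq> B"
    obtain C where C: "C \<in> D" "r B = rho C + card (B - C)" using rex by blast
    have "card (A - C) \<le> card (B - C)" using AB B assms
      by (intro card_mono) (auto intro: finite_subset)
    then show "r A \<le> r B" using rle[OF C(1), of A] C by linarith
  next
    fix X Y assume X: "X \<in> Pow E" and Y: "Y \<in> Pow E"
    obtain A where A: "A \<in> D" "r X = rho A + card (X - A)" using rex by blast
    obtain B where B: "B \<in> D" "r Y = rho B + card (Y - B)" using rex by blast
    have "A \<union> B \<in> D" "A \<inter> B \<in> D" using cl A B by auto
    then have "r (X \<union> Y) + r (X \<inter> Y) \<le> rho (A \<union> B) + card (X \<union> Y - (A \<union> B)) + (rho (A \<inter> B) + card (X \<inter> Y - (A \<inter> B)))"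
      using rle by (meson add_mono)
    moreover have "card (X \<union> Y - (A \<union> B)) + card (X \<inter> Y - (A \<inter> B)) \<le> card (X - A) + card (Y - B)"
      using X Y assms by (intro card_ineq) (auto intro: finite_subset)
    moreover have "rho (A \<union> B) + rho (A \<inter> B) \<le> rho A + rho B" using sub A B by auto
    ultimately show "r X + r Y \<ge> r (X \<union> Y) + r (X \<inter> Y)" using A B by linarith
  next
    fix X e assume "X \<in> Pow E" "X \<union> {e} \<in> Pow E"
    obtain A where A: "A \<in> D" "r X = rho A + card (X - A)" using rex by blast
    have fin: "finite X" using \<open>X \<in> Pow E\<close> assms by (auto intro: finite_subset)
    have "card (X \<union> {e} - A) \<le> card (X - A) + 1"
    proof -
      have "X \<union> {e} - A \<subseteq> insert e (X - A)" by auto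
      then have "card (X \<union> {e} - A) \<le> card (insert e (X - A))"
        using fin by (intro card_mono) auto
      also have "\<dots> \<le> card (X - A) + 1" using fin by (simp add: card_insert_if)
      finally show ?thesis .
    qed
    then show "r (X \<union> {e}) \<le> r X + 1" using rle[OF A(1), of "X \<union> {e}"] A by linarith
  qed
  then show "accessible_distributive_lattice E D \<and> (\<exists>r. matroid_rank E r \<and> (\<forall>A\<in>D. rho A = r A))"
    using adl agree by blast
qed

end
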